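(* Fix integers $\Lambda\ge1$, $K\ge1$ and $N\ge K$, and consider the ensemble $\mathcal B$ of all connectivities in which each of the $K$ users may be connected to an arbitrary subset (possibly empty, possibly all) of the $\Lambda$ caches, all connectivities being equiprobable. Under a fixed uncoded cache placement (common to all connectivities), the optimal average worst-case load satisfies $R^\star_{\text{avg},\mathcal B}(M)\ge R_{\text{avg},\mathcal B,\text{LB}}(M)$ for all $M\in[0,N]$, where $R_{\text{avg},\mathcal B,\text{LB}}$ is the piecewise linear curve with corner points \[ \left(t\frac{N}{\Lambda},\ \sum_{\lambda=0}^{\Lambda}\left(\frac{K\binom{\Lambda}{t+\lambda}}{2^{\Lambda}\binom{\Lambda}{t}}+A_{t,\lambda}\right)\right),\qquad t\in\{0,1,\dots,\Lambda\}, \] with \[ A_{t,\lambda}=\frac{K}{|\mathcal B|}\binom{\Lambda-t}{\lambda}\left(1-\frac{1}{\binom{t+\lambda}{\lambda}}\right),\qquad |\mathcal B|=\binom{K+2^{\Lambda}-1}{K}. \]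
   Context: Multi-access coded caching model: a server holds $N$ files $W_1,\dots,W_N$ of $B$ bits each; $\Lambda$ caches, each storing $MB$ bits; $K$ users, $N\ge K$. Each user $u$ is connected to a subset $\mathcal U_u\subseteq[\Lambda]$ of caches and can read their full contents. A connectivity is identified, up to permutation of users, with the vector $(K_{\mathcal U}:\mathcal U\subseteq[\Lambda])$ of non-negative integers summing to $K$, where $K_{\mathcal U}$ is the number of users whose set of connected caches is exactly $\mathcal U$; $\mathcal B$ is the set of all such vectors (so $|\mathcal B|=\binom{K+2^\Lambda-1}{K}$). Uncoded placement: each file $W_n$ is partitioned into disjoint subfiles $W_{n,\mathcal T}$, $\mathcal T\subseteq[\Lambda]$, and cache $\ell$ stores exactly the $W_{n,\mathcal T}$ with $\ell\in\mathcal T$, at most $MB$ bits per cache. Delivery: each user requests a file index; the server broadcasts an error-free message $X$ depending on the library and demands; each user must decode its requested file from $X$ and its connected caches. For a placement $P$ and a connectivity $b$, $R_b(P)$ is the minimum over delivery schemes (designed knowing $b$) of the worst-case (over demand vectors) value of $|X|/B$. The optimal average worst-case load is $R^\star_{\text{avg},\mathcal B}(M)=\inf_P\frac{1}{|\mathcal B|}\sum_{b\in\mathcal B}R_b(P)$, the infimum over uncoded placements $P$ of cache size $M$ (the placement is fixed, chosen without knowledge of the connectivity). A piecewise linear curve with given corner points is the linear interpolation between consecutive points. Convention: $\binom{n}{k}=0$ if $n<0$, $k<0$ or $n<k$. *)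

theory Defs
  imports Complex_Main "HOL-Library.Multiset"
begin

text \<open>Files are indexed by n < N, bit positions by j < B,
  caches by l < Lam (so the cache set [Lambda] is rendered as {..<Lam}), users by u < K.
  A library is W :: nat => nat => bool (W n j = j-th bit of file n).\<close>

definition valid_lib :: "nat \<Rightarrow> nat \<Rightarrow> (nat \<Rightarrow> nat \<Rightarrow> bool) \<Rightarrow> bool" where
  "valid_lib N B W \<longleftrightarrow> (\<forall>n j. \<not> (n < N \<and> j < B) \<longrightarrow> W n j = False)"

text \<open>Uncoded placement: bit j of file n belongs to the subfile W_{n,T} with T = P n j,
  and cache l stores exactly those bits with l in T; at most M*B bits per cache.\<close>
definition uncoded_placement ::
  "nat \<Rightarrow> nat \<Rightarrow> nat \<Rightarrow> real \<Rightarrow> (nat \<Rightarrow> nat \<Rightarrow> nat set) \<Rightarrow> bool" where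
  "uncoded_placement Lam N B M P \<longleftrightarrow>
     (\<forall>n<N. \<forall>j<B. P n j \<subseteq> {..<Lam}) \<and>
     (\<forall>l<Lam. real (card {(n, j). n < N \<and> j < B \<and> l \<in> P n j}) \<le> M * real B)"

definition cache_view ::
  "nat \<Rightarrow> nat \<Rightarrow> (nat \<Rightarrow> nat \<Rightarrow> nat set) \<Rightarrow> nat set \<Rightarrow> (nat \<Rightarrow> nat \<Rightarrow> bool) \<Rightarrow> nat \<Rightarrow> nat \<Rightarrow> bool" where
  "cache_view N B P U W = (\<lambda>n j. if n < N \<and> j < B \<and> P n j \<inter> U \<noteq> {} then W n j else False)"

text \<open>Load r is achievable for placement P and user-to-cache connection list conn
  (user u is connected to conn ! u): there is an encoder (message as a bit string,
  depending on demands and library) of length at most r*B for every demand vector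
  and library, and decoders such that every user recovers its requested file.\<close>
definition achievable_load ::
  "nat \<Rightarrow> nat \<Rightarrow> nat \<Rightarrow> (nat \<Rightarrow> nat \<Rightarrow> nat set) \<Rightarrow> nat set list \<Rightarrow> real \<Rightarrow> bool" where
  "achievable_load K N B P conn r \<longleftrightarrow>
     (\<exists>(enc :: (nat \<Rightarrow> nat) \<Rightarrow> (nat \<Rightarrow> nat \<Rightarrow> bool) \<Rightarrow> bool list)
       (dec :: nat \<Rightarrow> (nat \<Rightarrow> nat) \<Rightarrow> bool list \<Rightarrow> (nat \<Rightarrow> nat \<Rightarrow> bool) \<Rightarrow> nat \<Rightarrow> bool).
       \<forall>d W. (\<forall>u<K. d u < N) \<and> valid_lib N B W \<longrightarrow>
          real (length (enc d W)) \<le> r * real B \<and>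
          (\<forall>u<K. \<forall>j<B. dec u d (enc d W) (cache_view N B P (conn ! u) W) j = W (d u) j))"

definition load_conn ::
  "nat \<Rightarrow> nat \<Rightarrow> nat \<Rightarrow> (nat \<Rightarrow> nat \<Rightarrow> nat set) \<Rightarrow> nat set list \<Rightarrow> real" where
  "load_conn K N B P conn = Inf {r. achievable_load K N B P conn r}"

text \<open>Connectivities up to user permutation: multisets of K subsets of the caches,
  i.e. the vectors (K_U) with sum K.\<close>
definition connectivities :: "nat \<Rightarrow> nat \<Rightarrow> nat set multiset set" where
  "connectivities Lam K = {b. size b = K \<and> set_mset b \<subseteq> Pow {..<Lam}}"

text \<open>R_b(P): realise b by any ordering of the users (the value does not depend on it).\<close>
definition load_b ::
  "nat \<Rightarrow> nat \<Rightarrow> nat \<Rightarrow> (nat \<Rightarrow> nat \<Rightarrow> nat set) \<Rightarrow> nat set multiset \<Rightarrow> real" where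
  "load_b K N B P b = load_conn K N B P (SOME xs. mset xs = b)"

definition R_star_avg :: "nat \<Rightarrow> nat \<Rightarrow> nat \<Rightarrow> nat \<Rightarrow> real \<Rightarrow> real" where
  "R_star_avg Lam K N B M =
     Inf ((\<lambda>P. (\<Sum>b\<in>connectivities Lam K. load_b K N B P b) / real (card (connectivities Lam K)))
          ` {P. uncoded_placement Lam N B M P})"

definition A_coef :: "nat \<Rightarrow> nat \<Rightarrow> nat \<Rightarrow> nat \<Rightarrow> real" where
  "A_coef Lam K t l =
     real K / real ((K + 2 ^ Lam - 1) choose K) * real ((Lam - t) choose l)
       * (1 - 1 / real ((t + l) choose l))"

definition corner_load :: "nat \<Rightarrow> nat \<Rightarrow> nat \<Rightarrow> real" where
  "corner_load Lam K t =
     (\<Sum>l = 0..Lam. real K * real (Lam choose (t + l)) / (2 ^ Lam * real (Lam choose t))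
                     + A_coef Lam K t l)"

text \<open>Piecewise linear curve through (t N / Lam, corner_load t), t = 0..Lam.
  With s = M Lam / N, on the segment t <= s <= t+1 the value is the linear interpolation.\<close>
definition R_avg_LB :: "nat \<Rightarrow> nat \<Rightarrow> nat \<Rightarrow> real \<Rightarrow> real" where
  "R_avg_LB Lam K N M =
     (let s = M * real Lam / real N; t = min (nat \<lfloor>s\<rfloor>) (Lam - 1)
      in corner_load Lam K t + (s - real t) * (corner_load Lam K (t + 1) - corner_load Lam K t))"

end

theory Submission
  imports Defs "HOL-Combinatorics.Multiset_Permutations"
begin


definition Asum :: "nat \<Rightarrow> nat \<Rightarrow> nat" where
  "Asum n t = (\<Sum>l\<le>n. n choose (t + l))"

definition Bsum :: "nat \<Rightarrow> nat \<Rightarrow> nat" where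
  "Bsum n t = (n choose t) + (\<Sum>d<n. 2 ^ d * ((n - Suc d) choose t))"

lemma Asum_rec: "Asum (Suc n) t = (if t = 0 then 0 else n choose (t - 1)) + 2 * Asum n t"
proof (cases t)
  case 0
  have "Asum (Suc n) 0 = 2 ^ Suc n" unfolding Asum_def using choose_row_sum[of "Suc n"] by simp
  moreover have "Asum n 0 = 2 ^ n" unfolding Asum_def using choose_row_sum[of n] by simp
  ultimately show ?thesis using 0 by simp
next
  case (Suc t')
  have "Asum (Suc n) t = (\<Sum>l\<le>Suc n. n choose (t' + l)) + (\<Sum>l\<le>Suc n. n choose (t + l))"
    unfolding Asum_def Suc by (simp add: sum.distrib)
  also have "(\<Sum>l\<le>Suc n. n choose (t' + l)) = (n choose t') + (\<Sum>l\<le>n. n choose (t + l))"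
    unfolding Suc by (subst sum.atMost_Suc_shift) simp
  also have "(\<Sum>l\<le>Suc n. n choose (t + l)) = (\<Sum>l\<le>n. n choose (t + l))"
    using Suc by simp
  finally show ?thesis unfolding Asum_def using Suc by simp
qed

lemma Bsum_rec: "Bsum (Suc n) t = (if t = 0 then 0 else n choose (t - 1)) + 2 * Bsum n t"
proof -
  have s: "(\<Sum>d<Suc n. 2 ^ d * ((Suc n - Suc d) choose t)) = (n choose t) + 2 * (\<Sum>d<n. 2 ^ d * ((n - Suc d) choose t))"
    by (subst sum.lessThan_Suc_shift) (simp add: sum_distrib_left mult.assoc)
  have p: "Suc n choose t = (if t = 0 then 0 else n choose (t - 1)) + (n choose t)"
    by (cases t) auto
  show ?thesis unfolding Bsum_def s p by simp
qed

lemma Asum_Bsum: "Asum n t = Bsum n t"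
proof (induction n arbitrary: t)
  case 0
  then show ?case by (simp add: Asum_def Bsum_def)
next
  case (Suc n)
  then show ?case by (simp add: Asum_rec Bsum_rec)
qed


primrec pos :: "'a list \<Rightarrow> 'a \<Rightarrow> nat" where
  "pos [] a = 0"
| "pos (x # xs) a = (if x = a then 0 else Suc (pos xs a))"

definition before :: "'a list \<Rightarrow> 'a set \<Rightarrow> 'a set \<Rightarrow> bool" where
  "before xs U T \<longleftrightarrow> (\<forall>a\<in>U. \<forall>x\<in>T. pos xs a < pos xs x)"

lemma card_Pow_split:
  assumes "finite A" "x \<in> A"
  shows "card {U. U \<subseteq> A \<and> Q (U - {x})} = 2 * card {V. V \<subseteq> A - {x} \<and> Q V}"
proof -
  let ?S = "{V. V \<subseteq> A - {x} \<and> Q V}"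
  have eq: "{U. U \<subseteq> A \<and> Q (U - {x})} = ?S \<union> insert x ` ?S"
  proof (intro set_eqI iffI)
    fix U assume "U \<in> {U. U \<subseteq> A \<and> Q (U - {x})}"
    then have U: "U \<subseteq> A" "Q (U - {x})" by auto
    show "U \<in> ?S \<union> insert x ` ?S"
    proof (cases "x \<in> U")
      case True
      then have "U = insert x (U - {x})" by auto
      moreover have "U - {x} \<in> ?S" using U by auto
      ultimately show ?thesis by blast
    next
      case False
      then have "U - {x} = U" by auto
      then show ?thesis using U False by auto
    qed
  next
    fix U assume "U \<in> ?S \<union> insert x ` ?S"
    then show "U \<in> {U. U \<subseteq> A \<and> Q (U - {x})}"
    proof
      assume "U \<in> ?S" then have "U - {x} = U" by auto
      then show ?thesis using \<open>U \<in> ?S\<close> by auto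
    next
      assume "U \<in> insert x ` ?S"
      then obtain V where V: "V \<in> ?S" "U = insert x V" by auto
      then have "U - {x} = V" by auto
      then show ?thesis using V assms by auto
    qed
  qed
  have fin: "finite ?S" using assms by (auto intro: finite_subset[of _ "Pow (A - {x})"])
  have disj: "?S \<inter> insert x ` ?S = {}" by auto
  have inj: "inj_on (insert x) ?S"
    by (rule inj_onI) (metis (no_types, lifting) Diff_insert_absorb mem_Collect_eq subset_Diff_insert)
  show ?thesis unfolding eq
    by (subst card_Un_disjoint) (use fin disj inj in \<open>auto simp: card_image\<close>)
qed

lemma before_Cons_T:
  assumes "x \<in> T"
  shows "before (x # ys) U T \<longleftrightarrow> U = {}"
  using assms unfolding before_def by (auto simp: split: if_splits)

lemma before_Cons_notT:
  assumes "x \<notin> T"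
  shows "before (x # ys) U T \<longleftrightarrow> before ys (U - {x}) T"
  using assms unfolding before_def by (auto split: if_splits)


lemma perm_sum_split:
  assumes "finite A" "A \<noteq> {}"
  shows "(\<Sum>xs\<in>permutations_of_set A. f xs) = (\<Sum>x\<in>A. \<Sum>ys\<in>permutations_of_set (A - {x}). f (x # ys))"
proof -
  have "(\<Sum>xs\<in>permutations_of_set A. f xs) = (\<Sum>xs\<in>(\<Union>x\<in>A. (\<lambda>xs. x # xs) ` permutations_of_set (A - {x})). f xs)"
    by (subst permutations_of_set_nonempty[OF assms(2)]) (rule refl)
  also have "\<dots> = (\<Sum>x\<in>A. \<Sum>xs\<in>(\<lambda>xs. x # xs) ` permutations_of_set (A - {x}). f xs)"
    by (rule sum.UNION_disjoint) (use assms(1) in auto)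
  also have "\<dots> = (\<Sum>x\<in>A. \<Sum>ys\<in>permutations_of_set (A - {x}). f (x # ys))"
    by (rule sum.cong[OF refl], subst sum.reindex) (auto simp: inj_on_def)
  finally show ?thesis .
qed


lemma Fperm:
  assumes "finite A" "T \<subseteq> A"
  shows "(\<Sum>xs\<in>permutations_of_set A. card {U. U \<subseteq> A \<and> before xs U T}) * (card A choose card T)
         = fact (card A) * Asum (card A) (card T)"
  using assms
proof (induction "card A" arbitrary: A T)
  case 0
  then have "A = {}" "T = {}" by auto
  then show ?case by (simp add: Asum_def before_def)
next
  case (Suc n)
  have fA: "finite A" by fact
  have Ane: "A \<noteq> {}" using Suc.hyps(2) by auto
  define G where "G = (\<lambda>x. (\<Sum>ys\<in>permutations_of_set (A - {x}). card {V. V \<subseteq> A - {x} \<and> before ys V T}))"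
  define t where "t = card T"
  let ?f = "\<lambda>xs. card {U. U \<subseteq> A \<and> before xs U T}"
  have s1: "(\<Sum>xs\<in>permutations_of_set A. ?f xs)
        = (\<Sum>x\<in>A. \<Sum>ys\<in>permutations_of_set (A - {x}). ?f (x # ys))"
    by (rule perm_sum_split[OF fA Ane])
  have s2: "(\<Sum>x\<in>A. \<Sum>ys\<in>permutations_of_set (A - {x}). ?f (x # ys))
       = (\<Sum>x\<in>A \<inter> T. \<Sum>ys\<in>permutations_of_set (A - {x}). ?f (x # ys))
         + (\<Sum>x\<in>A - T. \<Sum>ys\<in>permutations_of_set (A - {x}). ?f (x # ys))"
    using fA by (rule sum.Int_Diff)
  have s3: "(\<Sum>x\<in>A \<inter> T. \<Sum>ys\<in>permutations_of_set (A - {x}). ?f (x # ys)) = (\<Sum>x\<in>A \<inter> T. fact n)"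
  proof (rule sum.cong[OF refl])
    fix x assume x: "x \<in> A \<inter> T"
    have "\<And>ys. ?f (x # ys) = 1"
    proof -
      fix ys
      have "{U. U \<subseteq> A \<and> before (x # ys) U T} = {{}}" using x by (auto simp: before_Cons_T)
      then show "?f (x # ys) = 1" by simp
    qed
    then have "(\<Sum>ys\<in>permutations_of_set (A - {x}). ?f (x # ys)) = card (permutations_of_set (A - {x}))"
      by simp
    also have "\<dots> = fact n" using fA x Suc.hyps(2)[symmetric] by (simp add: card_Diff_singleton)
    finally show "(\<Sum>ys\<in>permutations_of_set (A - {x}). ?f (x # ys)) = fact n" .
  qed
  have s4: "(\<Sum>x\<in>A - T. \<Sum>ys\<in>permutations_of_set (A - {x}). ?f (x # ys)) = (\<Sum>x\<in>A - T. 2 * G x)"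
  proof (rule sum.cong[OF refl])
    fix x assume x: "x \<in> A - T"
    have "\<And>ys. ?f (x # ys) = 2 * card {V. V \<subseteq> A - {x} \<and> before ys V T}"
    proof -
      fix ys
      have "?f (x # ys) = card {U. U \<subseteq> A \<and> before ys (U - {x}) T}"
        using x by (simp add: before_Cons_notT)
      also have "\<dots> = 2 * card {V. V \<subseteq> A - {x} \<and> before ys V T}"
        using card_Pow_split[OF fA, of x "\<lambda>V. before ys V T"] x by simp
      finally show "?f (x # ys) = 2 * card {V. V \<subseteq> A - {x} \<and> before ys V T}" .
    qed
    then show "(\<Sum>ys\<in>permutations_of_set (A - {x}). ?f (x # ys)) = 2 * G x"
      unfolding G_def by (simp add: sum_distrib_left)
  qed
  have AT: "A \<inter> T = T" using Suc.prems by auto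
  have step: "(\<Sum>xs\<in>permutations_of_set A. ?f xs) = t * fact n + (\<Sum>x\<in>A - T. 2 * G x)"
    using s1 s2 s3 s4 AT unfolding t_def by simp
  have tle: "t \<le> Suc n" using Suc.hyps(2) Suc.prems card_mono unfolding t_def by metis
  have IH: "\<And>x. x \<in> A - T \<Longrightarrow> G x * (n choose t) = fact n * Asum n t"
  proof -
    fix x assume x: "x \<in> A - T"
    have "card (A - {x}) = n" using x Suc.hyps(2) Suc.prems by auto
    then show "G x * (n choose t) = fact n * Asum n t"
      using Suc.hyps(1)[of "A - {x}" T] Suc.prems x unfolding t_def G_def by auto
  qed
  have cardAT: "card (A - T) = Suc n - t" using Suc.prems Suc.hyps(2) unfolding t_def
    by (simp add: card_Diff_subset finite_subset)
  have key: "(Suc n - t) * (Suc n choose t) = Suc n * (n choose t)"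
    using binomial_absorb_comp[of "Suc n" t] by simp
  show ?case
  proof (cases "t = Suc n")
    case True
    then have e: "A - T = {}" using cardAT fA by simp
    have "(\<Sum>xs\<in>permutations_of_set A. ?f xs) = fact (Suc n)" unfolding step e True by simp
    moreover have "Asum (Suc n) (Suc n) = 1" by (simp only: Asum_rec) (simp add: Asum_def)
    ultimately show ?thesis using True Suc.hyps(2) unfolding t_def by simp
  next
    case False
    then have tn: "t \<le> n" using tle by simp
    then have pos: "n choose t > 0" by simp
    have sumG: "(\<Sum>x\<in>A - T. 2 * G x) * (n choose t) = (Suc n - t) * (2 * fact n * Asum n t)"
      using IH cardAT by (simp add: sum_distrib_right mult.assoc)
    have tt: "t * (Suc n choose t) = Suc n * (if t = 0 then 0 else n choose (t - 1))"
    proof (cases t)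
      case (Suc k)
      have "Suc k * (Suc n choose Suc k) = Suc n * (n choose k)"
        using Suc_times_binomial_eq[of n k] by (simp only: mult.commute)
      then show ?thesis using Suc by simp
    qed simp
    have "((\<Sum>xs\<in>permutations_of_set A. ?f xs) * (Suc n choose t)) * (n choose t)
        = (t * fact n * (Suc n choose t)) * (n choose t) + ((\<Sum>x\<in>A - T. 2 * G x) * (n choose t)) * (Suc n choose t)"
      unfolding step by (simp add: algebra_simps)
    also have "\<dots> = (fact n * (t * (Suc n choose t))) * (n choose t) + (Suc n - t) * (Suc n choose t) * (2 * fact n * Asum n t)"
      unfolding sumG by (simp add: algebra_simps)
    also have "\<dots> = (fact (Suc n) * Asum (Suc n) t) * (n choose t)"
      unfolding tt key by (simp add: Asum_rec algebra_simps)
    finally have "((\<Sum>xs\<in>permutations_of_set A. ?f xs) * (Suc n choose t)) * (n choose t)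
        = (fact (Suc n) * Asum (Suc n) t) * (n choose t)" .
    then show ?thesis using pos Suc.hyps(2) unfolding t_def by simp
  qed
qed


definition cdec :: "nat \<Rightarrow> (nat \<Rightarrow> real) \<Rightarrow> bool" where
  "cdec L g \<longleftrightarrow> (\<forall>t. t + 2 \<le> L \<longrightarrow> g (t + 1) - g t \<le> g (t + 2) - g (t + 1)) \<and>
                 (\<forall>t. t + 1 \<le> L \<longrightarrow> g (t + 1) \<le> g t)"

lemma cdec_const: "cdec L (\<lambda>t. c)" by (simp add: cdec_def)

lemma cdec_scale: "cdec L f \<Longrightarrow> 0 \<le> a \<Longrightarrow> cdec L (\<lambda>t. a * f t)"
  unfolding cdec_def by (auto simp: right_diff_distrib[symmetric] intro: mult_left_mono)

lemma cdec_add: "cdec L f \<Longrightarrow> cdec L g \<Longrightarrow> cdec L (\<lambda>t. f t + g t)"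
proof -
  assume f: "cdec L f" and g: "cdec L g"
  show ?thesis unfolding cdec_def
  proof (intro conjI allI impI)
    fix t assume "t + 2 \<le> L"
    then have "f (t + 1) - f t \<le> f (t + 2) - f (t + 1)" "g (t + 1) - g t \<le> g (t + 2) - g (t + 1)"
      using f g unfolding cdec_def by auto
    then show "f (t + 1) + g (t + 1) - (f t + g t) \<le> f (t + 2) + g (t + 2) - (f (t + 1) + g (t + 1))"
      by linarith
  next
    fix t assume "t + 1 \<le> L"
    then have "f (t + 1) \<le> f t" "g (t + 1) \<le> g t" using f g unfolding cdec_def by auto
    then show "f (t + 1) + g (t + 1) \<le> f t + g t" by linarith
  qed
qed

lemma cdec_sum: "finite D \<Longrightarrow> (\<And>d. d \<in> D \<Longrightarrow> cdec L (f d)) \<Longrightarrow> cdec L (\<lambda>t. \<Sum>d\<in>D. f d t)"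
proof (induction D rule: finite_induct)
  case empty then show ?case by (simp add: cdec_const)
next
  case (insert x F)
  then show ?case by (simp add: cdec_add)
qed

lemma cdec_pow: "cdec L (\<lambda>t. 2 ^ (L - t))"
  unfolding cdec_def
proof (intro conjI allI impI)
  fix t assume "t + 2 \<le> L"
  define r where "r = L - (t + 2)"
  have e: "L - t = Suc (Suc r)" "L - (t + 1) = Suc r" using \<open>t + 2 \<le> L\<close> unfolding r_def by arith+
  have "(0::real) \<le> 2 ^ r" by simp
  then show "(2::real) ^ (L - (t + 1)) - 2 ^ (L - t) \<le> 2 ^ (L - (t + 2)) - 2 ^ (L - (t + 1))"
    unfolding e r_def[symmetric] by simp
next
  fix t assume "t + 1 \<le> L"
  then show "(2::real) ^ (L - (t + 1)) \<le> 2 ^ (L - t)" by (intro power_increasing) auto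
qed

lemma choose_step: "((m::nat) choose (t + 1)) * (t + 1) = (m choose t) * (m - t)"
  using binomial_absorb_comp[of m t] binomial_absorption[of t m] by (simp add: mult.commute)

lemma q_step:
  assumes "t < m"
  shows "real ((m - e) choose (t + 1)) / real (m choose (t + 1))
       = real ((m - e) choose t) / real (m choose t) * (real (m - e - t) / real (m - t))"
proof -
  have a: "real ((m - e) choose (t + 1)) * real (t + 1) = real ((m - e) choose t) * real (m - e - t)"
    using choose_step[of "m - e" t] by (metis of_nat_mult)
  have b: "real (m choose (t + 1)) * real (t + 1) = real (m choose t) * real (m - t)"
    using choose_step[of m t] by (metis of_nat_mult)
  have p1: "real (m choose t) > 0" "real (m - t) > 0" using assms by auto
  have "real ((m - e) choose (t + 1)) / real (m choose (t + 1))
      = (real ((m - e) choose (t + 1)) * real (t + 1)) / (real (m choose (t + 1)) * real (t + 1))"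
    by simp
  also have "\<dots> = (real ((m - e) choose t) * real (m - e - t)) / (real (m choose t) * real (m - t))"
    unfolding a b ..
  finally show ?thesis by simp
qed

lemma cdec_q:
  assumes "e \<ge> 1"
  shows "cdec m (\<lambda>t. real ((m - e) choose t) / real (m choose t))"
  unfolding cdec_def
proof (intro conjI allI impI)
  fix t assume t: "t + 1 \<le> m"
  define a where "a = real ((m - e) choose t) / real (m choose t)"
  have a0: "a \<ge> 0" unfolding a_def by simp
  have "real (m - e - t) / real (m - t) \<le> 1" using t by (simp add: divide_le_eq_1)
  then have "a * (real (m - e - t) / real (m - t)) \<le> a" using a0 by (rule mult_left_le)
  then show "real ((m - e) choose (t + 1)) / real (m choose (t + 1)) \<le> real ((m - e) choose t) / real (m choose t)"
    using q_step[of t m e] t unfolding a_def by simp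
next
  fix t assume t: "t + 2 \<le> m"
  define a where "a = real ((m - e) choose t) / real (m choose t)"
  have a0: "a \<ge> 0" unfolding a_def by simp
  define r1 where "r1 = real (m - e - t) / real (m - t)"
  define r2 where "r2 = real (m - e - (t + 1)) / real (m - (t + 1))"
  have q1: "real ((m - e) choose (t + 1)) / real (m choose (t + 1)) = a * r1"
    using q_step[of t m e] t unfolding a_def r1_def by simp
  have q2: "real ((m - e) choose (t + 2)) / real (m choose (t + 2)) = a * r1 * r2"
  proof -
    have e2: "t + 1 + 1 = t + 2" by simp
    have s: "real ((m - e) choose (t + 2)) / real (m choose (t + 2))
        = real ((m - e) choose (t + 1)) / real (m choose (t + 1)) * r2"
      unfolding r2_def by (rule q_step[of "t + 1" m e, unfolded e2]) (use t in simp)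
    show ?thesis by (simp only: s q1)
  qed
  have ineq: "2 * r1 \<le> 1 + r1 * r2"
  proof (cases "e \<ge> m - t")
    case True
    then have "r1 = 0" unfolding r1_def by simp
    then show ?thesis by simp
  next
    case False
    define u where "u = m - t"
    have u2: "u \<ge> 2" using t unfolding u_def by simp
    have eu: "e < u" using False unfolding u_def by simp
    have up: "real u > 1" using u2 by simp
    have ep: "real e \<ge> 1" "real e < real u" using assms eu by auto
    have d1: "real (m - e - t) = real u - real e" using eu unfolding u_def by (simp add: of_nat_diff)
    have d2: "real (m - t) = real u" unfolding u_def ..
    have d3: "real (m - e - (t + 1)) = real u - 1 - real e" using eu unfolding u_def by (simp add: of_nat_diff)
    have d4: "real (m - (t + 1)) = real u - 1" using u2 unfolding u_def by (simp add: of_nat_diff)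
    have r1u: "r1 * real u = real u - real e" unfolding r1_def d1 d2 using up by simp
    have r2u: "r2 * (real u - 1) = real u - 1 - real e" unfolding r2_def d3 d4 using up by simp
    have "(1 + r1 * r2 - 2 * r1) * (real u * (real u * (real u - 1)))
          = real u * real u * (real u - 1) + (r1 * real u) * (r2 * (real u - 1)) * real u
            - 2 * (r1 * real u) * real u * (real u - 1)"
      by (simp add: algebra_simps)
    also have "\<dots> = real e * (real e * (real u - 1) - (real u - real e))"
      unfolding r1u r2u by (simp add: algebra_simps)
    finally have "(1 + r1 * r2 - 2 * r1) * (real u * (real u * (real u - 1)))
          = real e * (real e * (real u - 1) - (real u - real e))" .
    moreover have "real e * (real e * (real u - 1) - (real u - real e)) \<ge> 0"
    proof -
      have "real e * (real u - 1) - (real u - real e) = (real e - 1) * real u"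
        by (simp add: algebra_simps)
      then show ?thesis using ep up by simp
    qed
    moreover have "real u * (real u * (real u - 1)) > 0" using up by simp
    ultimately have "1 + r1 * r2 - 2 * r1 \<ge> 0"
      by (metis zero_le_mult_iff linorder_not_le)
    then show ?thesis by simp
  qed
  have "a * r1 - a \<le> a * r1 * r2 - a * r1"
  proof -
    have "a * (2 * r1) \<le> a * (1 + r1 * r2)" using a0 ineq by (rule mult_left_mono[rotated])
    then show ?thesis by (simp add: algebra_simps)
  qed
  then show "real ((m - e) choose (t + 1)) / real (m choose (t + 1)) - real ((m - e) choose t) / real (m choose t)
    \<le> real ((m - e) choose (t + 2)) / real (m choose (t + 2)) - real ((m - e) choose (t + 1)) / real (m choose (t + 1))"
    unfolding q1 q2 a_def[symmetric] by simp
qed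


lemma cdec_D_mono:
  assumes "cdec L g" "i \<le> j" "j + 1 \<le> L"
  shows "g (i + 1) - g i \<le> g (j + 1) - g j"
  using assms(2,3)
proof (induction j)
  case 0 then show ?case by simp
next
  case (Suc j)
  show ?case
  proof (cases "i = Suc j")
    case True then show ?thesis by simp
  next
    case False
    then have "i \<le> j" using Suc.prems by simp
    then have "g (i + 1) - g i \<le> g (j + 1) - g j" using Suc by simp
    moreover have "g (j + 1) - g j \<le> g (j + 2) - g (j + 1)"
      using assms(1) Suc.prems unfolding cdec_def by simp
    ultimately show ?thesis by (simp add: numeral_2_eq_2)
  qed
qed

lemma cdec_line:
  assumes "cdec L g" "t0 + 1 \<le> L" "k \<le> L"
  shows "g t0 + (real k - real t0) * (g (t0 + 1) - g t0) \<le> g k"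
proof (cases "k \<le> t0")
  case True
  have "\<And>j. j \<le> t0 \<Longrightarrow> g t0 - real j * (g (t0 + 1) - g t0) \<le> g (t0 - j)"
  proof -
    fix j show "j \<le> t0 \<Longrightarrow> g t0 - real j * (g (t0 + 1) - g t0) \<le> g (t0 - j)"
    proof (induction j)
      case 0 then show ?case by simp
    next
      case (Suc j)
      have "g (t0 - Suc j + 1) - g (t0 - Suc j) \<le> g (t0 + 1) - g t0"
        using cdec_D_mono[OF assms(1), of "t0 - Suc j" t0] assms(2) by simp
      moreover have "t0 - Suc j + 1 = t0 - j" using Suc.prems by simp
      ultimately show ?case using Suc by (simp add: algebra_simps)
    qed
  qed
  from this[of "t0 - k"] True show ?thesis by (simp add: of_nat_diff algebra_simps)
next
  case False
  have "\<And>j. t0 + 1 + j \<le> L \<Longrightarrow> g t0 + (real (j + 1)) * (g (t0 + 1) - g t0) \<le> g (t0 + 1 + j)"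
  proof -
    fix j show "t0 + 1 + j \<le> L \<Longrightarrow> g t0 + (real (j + 1)) * (g (t0 + 1) - g t0) \<le> g (t0 + 1 + j)"
    proof (induction j)
      case 0 then show ?case by simp
    next
      case (Suc j)
      have "g (t0 + 1) - g t0 \<le> g (t0 + 1 + j + 1) - g (t0 + 1 + j)"
        using cdec_D_mono[OF assms(1), of t0 "t0 + 1 + j"] Suc.prems by simp
      then show ?case using Suc by (simp add: algebra_simps)
    qed
  qed
  from this[of "k - t0 - 1"] False assms(3) show ?thesis by (simp add: of_nat_diff algebra_simps)
qed

lemma jensen_interp:
  fixes g :: "nat \<Rightarrow> real" and k :: "'a \<Rightarrow> nat"
  assumes "cdec L g" "L \<ge> 1" "finite X"
    and "\<And>x. x \<in> X \<Longrightarrow> k x \<le> L"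
    and "(\<Sum>x\<in>X. real (k x)) \<le> real (card X) * s"
    and "t0 + 1 \<le> L"
  shows "real (card X) * (g t0 + (s - real t0) * (g (t0 + 1) - g t0)) \<le> (\<Sum>x\<in>X. g (k x))"
proof -
  define \<delta> where "\<delta> = g (t0 + 1) - g t0"
  have dle: "\<delta> \<le> 0" using assms(1,6) unfolding cdec_def \<delta>_def by simp
  have "(\<Sum>x\<in>X. g t0 + (real (k x) - real t0) * \<delta>) \<le> (\<Sum>x\<in>X. g (k x))"
    by (rule sum_mono) (use cdec_line[OF assms(1) assms(6)] assms(4) in \<open>auto simp: \<delta>_def\<close>)
  moreover have "(\<Sum>x\<in>X. g t0 + (real (k x) - real t0) * \<delta>)
      = real (card X) * g t0 + ((\<Sum>x\<in>X. real (k x)) - real (card X) * real t0) * \<delta>"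
    by (simp add: sum.distrib sum_subtractf sum_distrib_left sum_distrib_right algebra_simps)
  moreover have "((\<Sum>x\<in>X. real (k x)) - real (card X) * real t0) * \<delta> \<ge> (real (card X) * s - real (card X) * real t0) * \<delta>"
    using assms(5) dle by (intro mult_right_mono_neg) auto
  ultimately show ?thesis unfolding \<delta>_def[symmetric] by (simp add: algebra_simps)
qed


lemma cdec_cong: "cdec L f \<Longrightarrow> (\<And>t. t \<le> L \<Longrightarrow> f t = g t) \<Longrightarrow> cdec L g"
  unfolding cdec_def by auto

lemma ratio_eq:
  assumes "t \<le> L"
  shows "real ((L - t) choose l) / real ((t + l) choose l) = real (L choose (t + l)) / real (L choose t)"
proof (cases "t + l \<le> L")
  case True
  have "(L choose (t + l)) * ((t + l) choose t) = (L choose t) * ((L - t) choose (t + l - t))"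
    by (rule choose_mult) (use True in auto)
  then have e: "(L choose (t + l)) * ((t + l) choose l) = (L choose t) * ((L - t) choose l)"
    by (metis add_diff_cancel_left' binomial_symmetric le_add1)
  have p: "real ((t + l) choose l) > 0" "real (L choose t) > 0" using assms by auto
  show ?thesis using e p by (simp add: field_simps flip: of_nat_mult)
next
  case False
  then have "L - t < l" "L < t + l" using assms by auto
  then show ?thesis by (simp add: binomial_eq_0)
qed

lemma pow_sum: "t \<le> L \<Longrightarrow> (\<Sum>l\<le>L. (L - t) choose l) = 2 ^ (L - t)"
proof -
  assume t: "t \<le> L"
  have "(\<Sum>l\<le>L. (L - t) choose l) = (\<Sum>l\<le>L - t. (L - t) choose l) + (\<Sum>l\<in>{L - t<..L}. (L - t) choose l)"
    by (subst sum.union_disjoint[symmetric]) (auto intro!: sum.cong)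
  also have "(\<Sum>l\<in>{L - t<..L}. (L - t) choose l) = 0" by simp
  finally show ?thesis by (simp add: choose_row_sum)
qed

definition Sc :: "nat \<Rightarrow> nat \<Rightarrow> real" where
  "Sc L t = real (Asum L t) / real (L choose t)"

lemma corner_eq:
  assumes "t \<le> Lam"
  shows "corner_load Lam K t = (real K / 2 ^ Lam - real K / real ((K + 2 ^ Lam - 1) choose K)) * Sc Lam t
          + real K / real ((K + 2 ^ Lam - 1) choose K) * 2 ^ (Lam - t)"
proof -
  define BB where "BB = real ((K + 2 ^ Lam - 1) choose K)"
  define C where "C = real (Lam choose t)"
  have Cp: "C > 0" unfolding C_def using assms by simp
  have A: "A_coef Lam K t l = real K / BB * (real ((Lam - t) choose l) - real (Lam choose (t + l)) / C)" for l
  proof -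
    have "real ((Lam - t) choose l) * (1 - 1 / real ((t + l) choose l))
       = real ((Lam - t) choose l) - real ((Lam - t) choose l) / real ((t + l) choose l)"
      by (simp add: algebra_simps)
    then show ?thesis unfolding A_coef_def BB_def C_def ratio_eq[OF assms] by simp
  qed
  have "corner_load Lam K t = (\<Sum>l\<le>Lam. real K * real (Lam choose (t + l)) / (2 ^ Lam * C))
       + (\<Sum>l\<le>Lam. real K / BB * (real ((Lam - t) choose l) - real (Lam choose (t + l)) / C))"
    unfolding corner_load_def A C_def by (simp add: sum.distrib atLeast0AtMost)
  also have "(\<Sum>l\<le>Lam. real K * real (Lam choose (t + l)) / (2 ^ Lam * C)) = real K / 2 ^ Lam * Sc Lam t"
    unfolding Sc_def Asum_def C_def by (simp add: sum_divide_distrib[symmetric] sum_distrib_left[symmetric])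
  also have "(\<Sum>l\<le>Lam. real K / BB * (real ((Lam - t) choose l) - real (Lam choose (t + l)) / C))
     = real K / BB * (2 ^ (Lam - t) - Sc Lam t)"
  proof -
    have "(\<Sum>l\<le>Lam. real ((Lam - t) choose l)) = 2 ^ (Lam - t)"
      using pow_sum[OF assms] by (metis of_nat_numeral of_nat_power of_nat_sum)
    moreover have "(\<Sum>l\<le>Lam. real (Lam choose (t + l)) / C) = Sc Lam t"
      unfolding Sc_def Asum_def C_def by (simp add: sum_divide_distrib[symmetric])
    ultimately show ?thesis
      by (subst sum_distrib_left[symmetric], subst sum_subtractf) (simp only:)
  qed
  finally show ?thesis unfolding BB_def by (simp add: algebra_simps diff_divide_distrib)
qed

lemma Sc_chain:
  assumes "t \<le> L"
  shows "Sc L t = 1 + (\<Sum>d<L. 2 ^ d * (real ((L - Suc d) choose t) / real (L choose t)))"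
proof -
  have Cp: "real (L choose t) > 0" using assms by simp
  have "Sc L t = real (Bsum L t) / real (L choose t)" unfolding Sc_def Asum_Bsum ..
  also have "\<dots> = (real (L choose t) + (\<Sum>d<L. 2 ^ d * real ((L - Suc d) choose t))) / real (L choose t)"
    unfolding Bsum_def by simp
  also have "\<dots> = 1 + (\<Sum>d<L. 2 ^ d * (real ((L - Suc d) choose t) / real (L choose t)))"
    using Cp by (simp add: add_divide_distrib sum_divide_distrib)
  finally show ?thesis .
qed

lemma cdec_Sc: "cdec L (Sc L)"
proof -
  have "cdec L (\<lambda>t. 1 + (\<Sum>d<L. 2 ^ d * (real ((L - Suc d) choose t) / real (L choose t))))"
    by (intro cdec_add cdec_const cdec_sum cdec_scale) (auto intro: cdec_q[of "Suc _" L, simplified])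
  then show ?thesis by (rule cdec_cong) (simp add: Sc_chain)
qed

lemma cdec_corner:
  assumes "real ((K + 2 ^ Lam - 1) choose K) \<ge> 2 ^ Lam"
  shows "cdec Lam (corner_load Lam K)"
proof -
  define BB where "BB = real ((K + 2 ^ Lam - 1) choose K)"
  have BBp: "BB > 0" unfolding BB_def by (rule less_le_trans[OF _ assms]) simp
  have a: "real K / 2 ^ Lam - real K / BB \<ge> 0"
    using assms BBp unfolding BB_def by (intro diff_ge_0_iff_ge[THEN iffD2] divide_left_mono) auto
  have "cdec Lam (\<lambda>t. (real K / 2 ^ Lam - real K / BB) * Sc Lam t + real K / BB * 2 ^ (Lam - t))"
    by (intro cdec_add cdec_scale cdec_Sc cdec_pow a) (use BBp in simp)
  then show ?thesis by (rule cdec_cong) (simp add: corner_eq BB_def)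
qed


lemma pow2_sum_lt: "(\<Sum>i\<le>L. (2::nat) ^ i) < 2 ^ Suc L"
  by (induction L) auto

lemma idx_lt: "a < N \<Longrightarrow> j < (B::nat) \<Longrightarrow> a * B + j < N * B"
proof -
  assume a: "a < N" and j: "j < B"
  have "a * B + j < a * B + B" using j by simp
  also have "\<dots> = Suc a * B" by simp
  also have "\<dots> \<le> N * B" using a by (intro mult_right_mono) auto
  finally show ?thesis .
qed

lemma achievable_exists: "achievable_load K N B P cs (real N)"
  unfolding achievable_load_def
  apply (rule exI[of _ "\<lambda>d W. map (\<lambda>i. W (i div B) (i mod B)) [0..<N * B]"])
  apply (rule exI[of _ "\<lambda>u d msg view j. msg ! (d u * B + j)"])
  apply (auto simp: idx_lt)
  done

lemma converse:
  fixes cs :: "nat set list" and d :: "nat \<Rightarrow> nat" and rk :: "nat \<Rightarrow> nat"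
  assumes ach: "achievable_load K N B P cs r"
    and dN: "\<forall>u<K. d u < N" and inj: "inj_on d {..<K}"
  defines "SS \<equiv> {(n, j). \<exists>u<K. n = d u \<and> j < B \<and> P n j \<inter> (\<Union>v\<in>{v. v < K \<and> rk v \<le> rk u}. cs ! v) = {}}"
  shows "real (card SS) \<le> r * real B"
proof -
  obtain enc :: "(nat \<Rightarrow> nat) \<Rightarrow> (nat \<Rightarrow> nat \<Rightarrow> bool) \<Rightarrow> bool list"
     and dec :: "nat \<Rightarrow> (nat \<Rightarrow> nat) \<Rightarrow> bool list \<Rightarrow> (nat \<Rightarrow> nat \<Rightarrow> bool) \<Rightarrow> nat \<Rightarrow> bool"
    where H0: "\<forall>d W. (\<forall>u<K. d u < N) \<and> valid_lib N B W \<longrightarrow>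
          real (length (enc d W)) \<le> r * real B \<and>
          (\<forall>u<K. \<forall>j<B. dec u d (enc d W) (cache_view N B P (cs ! u) W) j = W (d u) j)"
    using ach unfolding achievable_load_def by (elim exE) (rule that)
  have H: "\<And>W. valid_lib N B W \<Longrightarrow>
          real (length (enc d W)) \<le> r * real B \<and>
          (\<forall>u<K. \<forall>j<B. dec u d (enc d W) (cache_view N B P (cs ! u) W) j = W (d u) j)"
    using H0 dN by blast
  define lib where "lib = (\<lambda>Z n j. (n, j) \<in> (Z :: (nat \<times> nat) set))"
  have SSsub: "SS \<subseteq> {..<N} \<times> {..<B}" unfolding SS_def using dN by auto
  have finSS: "finite SS" by (rule finite_subset[OF SSsub]) simp
  have valid: "valid_lib N B (lib Z)" if "Z \<subseteq> SS" for Z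
    using that SSsub unfolding valid_lib_def lib_def by auto
  define Uu where "Uu = (\<lambda>u. \<Union>v\<in>{v. v < K \<and> rk v \<le> rk u}. cs ! v)"
  have SSmem: "(n, j) \<in> SS \<longleftrightarrow> (\<exists>u<K. n = d u \<and> j < B \<and> P n j \<inter> Uu u = {})" for n j
    unfolding SS_def Uu_def by auto
  have injenc: "inj_on (\<lambda>Z. enc d (lib Z)) (Pow SS)"
  proof (rule inj_onI)
    fix Z1 Z2 assume Z1: "Z1 \<in> Pow SS" and Z2: "Z2 \<in> Pow SS" and E: "enc d (lib Z1) = enc d (lib Z2)"
    have main: "\<forall>u<K. rk u = k \<longrightarrow> (\<forall>j. (d u, j) \<in> SS \<longrightarrow> ((d u, j) \<in> Z1 \<longleftrightarrow> (d u, j) \<in> Z2))" for k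
    proof (induction k rule: less_induct)
      case (less k)
      show ?case
      proof (intro allI impI)
        fix u j assume u: "u < K" and rku: "rk u = k" and mem: "(d u, j) \<in> SS"
        have jB: "j < B" using mem SSsub by auto
        have view: "cache_view N B P (cs ! u) (lib Z1) = cache_view N B P (cs ! u) (lib Z2)"
        proof (intro ext)
          fix n' j'
          show "cache_view N B P (cs ! u) (lib Z1) n' j' = cache_view N B P (cs ! u) (lib Z2) n' j'"
          proof (cases "n' < N \<and> j' < B \<and> P n' j' \<inter> cs ! u \<noteq> {}")
            case True
            show ?thesis
            proof (cases "(n', j') \<in> SS")
              case False
              then have "(n', j') \<notin> Z1" "(n', j') \<notin> Z2" using Z1 Z2 by auto
              then show ?thesis unfolding cache_view_def lib_def by simp
            next
              case True2: True
              then obtain v where v: "v < K" "n' = d v" "P n' j' \<inter> Uu v = {}" using SSmem by blast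
              have "rk v < rk u"
              proof (rule ccontr)
                assume "\<not> rk v < rk u"
                then have "cs ! u \<subseteq> Uu v" unfolding Uu_def using u by auto
                then show False using v(3) True by auto
              qed
              then have "(d v, j') \<in> Z1 \<longleftrightarrow> (d v, j') \<in> Z2"
                using less.IH[of "rk v"] rku v(1) True2 v(2) by blast
              then show ?thesis unfolding cache_view_def lib_def using v(2) by simp
            qed
          next
            case False
            then show ?thesis unfolding cache_view_def by auto
          qed
        qed
        have "lib Z1 (d u) j = lib Z2 (d u) j"
          using H[OF valid[of Z1]] H[OF valid[of Z2]] Z1 Z2 u jB E view by force
        then show "(d u, j) \<in> Z1 \<longleftrightarrow> (d u, j) \<in> Z2" unfolding lib_def by simp
      qed
    qed
    show "Z1 = Z2"
    proof (intro set_eqI iffI)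
      fix x assume "x \<in> Z1"
      obtain n j where x0: "x = (n, j)" by (cases x)
      then have x: "x = (n, j)" "(n, j) \<in> SS" using Z1 \<open>x \<in> Z1\<close> by auto
      then obtain u where "u < K" "n = d u" using SSmem by blast
      then show "x \<in> Z2" using main[of "rk u"] x \<open>x \<in> Z1\<close> by blast
    next
      fix x assume "x \<in> Z2"
      obtain n j where x0: "x = (n, j)" by (cases x)
      then have x: "x = (n, j)" "(n, j) \<in> SS" using Z2 \<open>x \<in> Z2\<close> by auto
      then obtain u where "u < K" "n = d u" using SSmem by blast
      then show "x \<in> Z1" using main[of "rk u"] x \<open>x \<in> Z2\<close> by blast
    qed
  qed
  have rB: "r * real B \<ge> 0"
    using H[OF valid[of "{}"]] by (smt (verit) of_nat_0_le_iff empty_subsetI)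
  define L where "L = nat \<lfloor>r * real B\<rfloor>"
  have lenL: "length (enc d (lib Z)) \<le> L" if "Z \<subseteq> SS" for Z
  proof -
    have "real (length (enc d (lib Z))) \<le> r * real B" using H[OF valid[OF that]] by simp
    then show ?thesis unfolding L_def by linarith
  qed
  have "2 ^ card SS = card ((\<lambda>Z. enc d (lib Z)) ` Pow SS)"
    using card_image[OF injenc] finSS by (simp add: card_Pow)
  also have "\<dots> \<le> card {xs. set xs \<subseteq> (UNIV :: bool set) \<and> length xs \<le> L}"
    by (rule card_mono) (use lenL finite_lists_length_le[of "UNIV :: bool set" L] in auto)
  also have "\<dots> = (\<Sum>i\<le>L. 2 ^ i)" using card_lists_length_le[of "UNIV :: bool set" L] by simp
  also have "\<dots> < 2 ^ Suc L" by (rule pow2_sum_lt)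
  finally have "card SS < Suc L" using power_strict_increasing_iff[of "2::nat" "card SS" "Suc L"] by simp
  then have "card SS \<le> L" by simp
  then have "real (card SS) \<le> real L" by simp
  also have "\<dots> \<le> r * real B" unfolding L_def using rB by linarith
  finally show ?thesis .
qed


lemma rot_inj_le: "(u + q1) mod N = (u + q2) mod (N::nat) \<Longrightarrow> q1 \<le> q2 \<Longrightarrow> q2 < N \<Longrightarrow> q1 = q2"
proof -
  assume a: "(u + q1) mod N = (u + q2) mod N" "q1 \<le> q2" "q2 < N"
  then have "N dvd (u + q2) - (u + q1)" using mod_eq_dvd_iff_nat[of "u + q1" "u + q2" N] by simp
  then have "N dvd q2 - q1" by simp
  moreover have "q2 - q1 < N" using a by simp
  ultimately have "q2 - q1 = 0" using dvd_imp_le by (metis neq0_conv not_le)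
  then show ?thesis using a by simp
qed
lemma rot_inj: "(u + q1) mod N = (u + q2) mod (N::nat) \<Longrightarrow> q1 < N \<Longrightarrow> q2 < N \<Longrightarrow> q1 = q2"
  by (metis rot_inj_le nat_le_linear)

lemma rot_sum:
  fixes f :: "nat \<Rightarrow> 'b::comm_monoid_add"
  assumes "N \<ge> 1"
  shows "(\<Sum>q<N. f ((u + q) mod N)) = (\<Sum>n<N. f n)"
proof -
  have inj: "inj_on (\<lambda>q. (u + q) mod N) {..<N}" by (auto intro!: inj_onI dest: rot_inj)
  have img: "(\<lambda>q. (u + q) mod N) ` {..<N} = {..<N}"
  proof (rule endo_inj_surj)
    show "(\<lambda>q. (u + q) mod N) ` {..<N} \<subseteq> {..<N}" using assms by auto
  qed (use inj in auto)
  show ?thesis using sum.reindex[OF inj, of f] img by simp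
qed

lemma converse_sum:
  fixes cs :: "nat set list" and d :: "nat \<Rightarrow> nat" and rk :: "nat \<Rightarrow> nat"
  assumes ach: "achievable_load K N B P cs r"
    and dN: "\<forall>u<K. d u < N" and inj: "inj_on d {..<K}"
    and \<Phi>: "\<And>u T. u < K \<Longrightarrow> \<Phi> u T \<Longrightarrow> T \<inter> (\<Union>v\<in>{v. v < K \<and> rk v \<le> rk u}. cs ! v) = {}"
  shows "real (\<Sum>u<K. card {j. j < B \<and> \<Phi> u (P (d u) j)}) \<le> r * real B"
proof -
  define SS where "SS = {(n, j). \<exists>u<K. n = d u \<and> j < B \<and> P n j \<inter> (\<Union>v\<in>{v. v < K \<and> rk v \<le> rk u}. cs ! v) = {}}"
  have c: "real (card SS) \<le> r * real B" unfolding SS_def by (rule converse[OF ach dN inj])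
  have sub: "(\<Union>u<K. (\<lambda>j. (d u, j)) ` {j. j < B \<and> \<Phi> u (P (d u) j)}) \<subseteq> SS"
    unfolding SS_def using \<Phi> by blast
  have finSS: "finite SS" by (rule finite_subset[of _ "{..<N} \<times> {..<B}"]) (use dN in \<open>auto simp: SS_def\<close>)
  have "(\<Sum>u<K. card {j. j < B \<and> \<Phi> u (P (d u) j)}) = (\<Sum>u<K. card ((\<lambda>j. (d u, j)) ` {j. j < B \<and> \<Phi> u (P (d u) j)}))"
    by (rule sum.cong[OF refl], rule card_image[symmetric]) (auto simp: inj_on_def)
  also have "\<dots> = card (\<Union>u<K. (\<lambda>j. (d u, j)) ` {j. j < B \<and> \<Phi> u (P (d u) j)})"
    by (rule card_UN_disjoint[symmetric]) (use inj in \<open>auto simp: inj_on_def\<close>)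
  also have "\<dots> \<le> card SS" by (rule card_mono[OF finSS sub])
  finally show ?thesis using c by linarith
qed

lemma load_conn_bound:
  fixes rk :: "nat \<Rightarrow> nat"
  assumes KN: "K \<le> N" "1 \<le> K" "1 \<le> B"
    and \<Phi>: "\<And>u T. u < K \<Longrightarrow> \<Phi> u T \<Longrightarrow> T \<inter> (\<Union>v\<in>{v. v < K \<and> rk v \<le> rk u}. cs ! v) = {}"
  shows "(\<Sum>u<K. \<Sum>n<N. real (card {j. j < B \<and> \<Phi> u (P n j)})) \<le> real N * real B * load_conn K N B P cs"
proof -
  define Q where "Q = (\<Sum>u<K. \<Sum>n<N. real (card {j. j < B \<and> \<Phi> u (P n j)}))"
  have N1: "N \<ge> 1" using KN by simp
  have NBpos: "real N * real B > 0" using N1 KN by simp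
  have "Q / (real N * real B) \<le> Inf {r. achievable_load K N B P cs r}"
  proof (rule cInf_greatest)
    show "{r. achievable_load K N B P cs r} \<noteq> {}" using achievable_exists by blast
  next
    fix r assume "r \<in> {r. achievable_load K N B P cs r}"
    then have ach: "achievable_load K N B P cs r" by simp
    have each: "real (\<Sum>u<K. card {j. j < B \<and> \<Phi> u (P ((u + q) mod N) j)}) \<le> r * real B" if q: "q < N" for q
    proof (rule converse_sum[where d = "\<lambda>u. (u + q) mod N" and rk = rk and \<Phi> = \<Phi>])
      show "achievable_load K N B P cs r" by (rule ach)
      show "\<And>u T. u < K \<Longrightarrow> \<Phi> u T \<Longrightarrow> T \<inter> (\<Union>v\<in>{v. v < K \<and> rk v \<le> rk u}. cs ! v) = {}"
        by (rule \<Phi>)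
      show "\<forall>u<K. (u + q) mod N < N" using N1 by auto
      show "inj_on (\<lambda>u. (u + q) mod N) {..<K}"
      proof (rule inj_onI)
        fix u v assume "u \<in> {..<K}" "v \<in> {..<K}" "(u + q) mod N = (v + q) mod N"
        then show "u = v" using rot_inj[of q u N v] KN by (simp add: add.commute)
      qed
    qed
    have "Q = (\<Sum>q<N. real (\<Sum>u<K. card {j. j < B \<and> \<Phi> u (P ((u + q) mod N) j)}))"
    proof -
      have "Q = (\<Sum>u<K. \<Sum>q<N. real (card {j. j < B \<and> \<Phi> u (P ((u + q) mod N) j)}))"
        unfolding Q_def by (rule sum.cong[OF refl]) (rule rot_sum[OF N1, symmetric])
      also have "\<dots> = (\<Sum>q<N. \<Sum>u<K. real (card {j. j < B \<and> \<Phi> u (P ((u + q) mod N) j)}))"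
        by (rule sum.swap)
      finally show ?thesis by simp
    qed
    also have "\<dots> \<le> (\<Sum>q<N. r * real B)" by (rule sum_mono) (use each in auto)
    also have "\<dots> = real N * real B * r" by simp
    finally show "Q / (real N * real B) \<le> r" using NBpos by (simp add: divide_le_eq mult.commute)
  qed
  then show ?thesis unfolding load_conn_def Q_def[symmetric] using NBpos by (simp add: divide_le_eq mult.commute)
qed


lemma conn_eq: "connectivities Lam K = multisets_of_size (Pow {..<Lam}) K"
  unfolding connectivities_def multisets_of_size_def by auto

lemma finite_conn: "finite (connectivities Lam K)"
  unfolding conn_eq by (rule finite_multisets_of_size) simp

lemma card_conn: "card (connectivities Lam K) = (K + 2 ^ Lam - 1) choose K"
  unfolding conn_eq by (subst card_multisets_of_size) (auto simp: card_Pow add.commute)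

lemma sum_nth_count:
  fixes f :: "'a \<Rightarrow> real"
  assumes "finite A" "set xs \<subseteq> A"
  shows "(\<Sum>u<length xs. f (xs ! u)) = (\<Sum>x\<in>A. real (count (mset xs) x) * f x)"
  using assms(2)
proof (induction xs)
  case Nil then show ?case by simp
next
  case (Cons a xs)
  have "(\<Sum>u<length (a # xs). f ((a # xs) ! u)) = f a + (\<Sum>u<length xs. f (xs ! u))"
    by (simp add: sum.lessThan_Suc_shift del: sum.lessThan_Suc)
  also have "\<dots> = f a + (\<Sum>x\<in>A. real (count (mset xs) x) * f x)" using Cons by simp
  also have "\<dots> = (\<Sum>x\<in>A. real (count (mset (a # xs)) x) * f x)"
  proof -
    have "(\<Sum>x\<in>A. real (count (mset (a # xs)) x) * f x)
        = (\<Sum>x\<in>A. (if x = a then f x else 0)) + (\<Sum>x\<in>A. real (count (mset xs) x) * f x)"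
      by (subst sum.distrib[symmetric], rule sum.cong) (auto simp: algebra_simps)
    also have "(\<Sum>x\<in>A. (if x = a then f x else 0)) = f a" using Cons.prems assms(1) by simp
    finally show ?thesis by simp
  qed
  finally show ?case .
qed

lemma size_count_sum:
  assumes "finite A" "set_mset b \<subseteq> A"
  shows "size b = (\<Sum>x\<in>A. count b x)"
proof -
  have "size b = (\<Sum>x\<in>set_mset b. count b x)" by (rule size_multiset_overloaded_eq)
  also have "\<dots> = (\<Sum>x\<in>A. count b x)"
    by (rule sum.mono_neutral_left) (use assms in \<open>auto simp: not_in_iff\<close>)
  finally show ?thesis .
qed

lemma count_sum_sym:
  assumes U: "U \<subseteq> {..<Lam}" and U': "U' \<subseteq> {..<Lam}"
  shows "(\<Sum>b\<in>connectivities Lam K. count b U) = (\<Sum>b\<in>connectivities Lam K. count b U')"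
proof -
  define sw where "sw = (\<lambda>x. if x = U then U' else if x = U' then U else x)"
  have swsw: "sw (sw x) = x" for x unfolding sw_def by auto
  have swinv: "sw -` {U'} = {U}"
  proof (intro set_eqI)
    fix x show "x \<in> sw -` {U'} \<longleftrightarrow> x \<in> {U}"
    proof (cases "x = U")
      case True then show ?thesis unfolding sw_def by simp
    next
      case False
      show ?thesis
      proof (cases "x = U'")
        case True then show ?thesis using False unfolding sw_def by simp
      next
        case False2: False
        then show ?thesis using False unfolding sw_def by simp
      qed
    qed
  qed
  have swPow: "x \<in> Pow {..<Lam} \<Longrightarrow> sw x \<in> Pow {..<Lam}" for x using U U' unfolding sw_def by auto
  have img: "b \<in> connectivities Lam K \<Longrightarrow> image_mset sw b \<in> connectivities Lam K" for b
    unfolding connectivities_def using swPow by auto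
  have invol: "image_mset sw (image_mset sw b) = b" for b
    by (simp add: image_mset.compositionality comp_def swsw)
  have cnt: "count (image_mset sw b) U' = count b U" for b
  proof -
    have "count (image_mset sw b) U' = sum (count b) (sw -` {U'} \<inter> set_mset b)"
      by (rule count_image_mset)
    also have "\<dots> = sum (count b) ({U} \<inter> set_mset b)" unfolding swinv ..
    also have "\<dots> = count b U" by (cases "U \<in># b") (auto simp: not_in_iff)
    finally show ?thesis .
  qed
  have "(\<Sum>b\<in>connectivities Lam K. count b U') = (\<Sum>b\<in>connectivities Lam K. count (image_mset sw b) U')"
    by (rule sum.reindex_bij_witness[of _ "image_mset sw" "image_mset sw"]) (auto simp: invol img)
  also have "\<dots> = (\<Sum>b\<in>connectivities Lam K. count b U)" by (simp add: cnt)
  finally show ?thesis by simp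
qed

lemma count_sum_val:
  assumes U: "U \<subseteq> {..<Lam}"
  shows "real (\<Sum>b\<in>connectivities Lam K. count b U) = real K * real (card (connectivities Lam K)) / 2 ^ Lam"
proof -
  define c0 where "c0 = (\<Sum>b\<in>connectivities Lam K. count b U)"
  have all: "(\<Sum>b\<in>connectivities Lam K. count b U') = c0" if "U' \<in> Pow {..<Lam}" for U'
    unfolding c0_def using count_sum_sym[OF _ U, of U'] that by auto
  have "(\<Sum>U'\<in>Pow {..<Lam}. \<Sum>b\<in>connectivities Lam K. count b U') = (\<Sum>b\<in>connectivities Lam K. \<Sum>U'\<in>Pow {..<Lam}. count b U')"
    by (rule sum.swap)
  also have "\<dots> = (\<Sum>b\<in>connectivities Lam K. K)"
  proof (rule sum.cong[OF refl])
    fix b assume "b \<in> connectivities Lam K"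
    then have "size b = K" "set_mset b \<subseteq> Pow {..<Lam}" unfolding connectivities_def by auto
    then show "(\<Sum>U'\<in>Pow {..<Lam}. count b U') = K" using size_count_sum[of "Pow {..<Lam}" b] by simp
  qed
  finally have "2 ^ Lam * c0 = K * card (connectivities Lam K)" using all by (simp add: card_Pow)
  then have "real (2 ^ Lam * c0) = real (K * card (connectivities Lam K))" by simp
  then show ?thesis unfolding c0_def[symmetric] by (simp add: field_simps)
qed


definition conn_list :: "nat set multiset \<Rightarrow> nat set list" where
  "conn_list b = (SOME xs. mset xs = b)"

lemma mset_conn_list: "mset (conn_list b) = b"
  unfolding conn_list_def by (rule someI_ex) (rule ex_mset)

lemma load_b_conn_list: "load_b K N B P b = load_conn K N B P (conn_list b)"
  unfolding load_b_def conn_list_def ..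

lemma card_filter_sum: "real (card {j. j < (B::nat) \<and> Q j}) = (\<Sum>j<B. if Q j then 1 else (0::real))"
proof -
  have "{j. j < B \<and> Q j} = {j \<in> {..<B}. Q j}" by auto
  then have "real (card {j. j < B \<and> Q j}) = (\<Sum>j\<in>{j \<in> {..<B}. Q j}. 1)" by simp
  also have "\<dots> = (\<Sum>j<B. if Q j then 1 else (0::real))" by (rule sum.inter_filter) simp
  finally show ?thesis .
qed

definition gperm :: "nat \<Rightarrow> nat set \<Rightarrow> nat set \<Rightarrow> real" where
  "gperm L U T = real (card {xs \<in> permutations_of_set {..<L}. before xs U T}) / fact L"

lemma load_bound_ind:
  fixes rk :: "nat \<Rightarrow> nat"
  assumes KN: "K \<le> N" "1 \<le> K" "1 \<le> B"
    and \<Phi>: "\<And>u T. u < K \<Longrightarrow> \<Phi> u T \<Longrightarrow> T \<inter> (\<Union>v\<in>{v. v < K \<and> rk v \<le> rk u}. cs ! v) = {}"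
  shows "(\<Sum>n<N. \<Sum>j<B. \<Sum>u<K. if \<Phi> u (P n j) then 1 else (0::real)) \<le> real N * real B * load_conn K N B P cs"
proof -
  have "(\<Sum>n<N. \<Sum>j<B. \<Sum>u<K. if \<Phi> u (P n j) then 1 else (0::real))
      = (\<Sum>u<K. \<Sum>n<N. real (card {j. j < B \<and> \<Phi> u (P n j)}))"
    unfolding card_filter_sum
    by (subst sum.swap, rule sum.cong[OF refl], subst sum.swap, rule refl)
  also have "\<dots> \<le> real N * real B * load_conn K N B P cs"
    by (rule load_conn_bound[OF KN \<Phi>])
  finally show ?thesis .
qed

lemma b_bound1:
  assumes b: "b \<in> connectivities L K" and KN: "K \<le> N" "1 \<le> K" "1 \<le> B"
  shows "(\<Sum>n<N. \<Sum>j<B. \<Sum>U\<in>Pow {..<L}. real (count b U) * gperm L U (P n j))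
         \<le> real N * real B * load_b K N B P b"
proof -
  define cs where "cs = conn_list b"
  have mcs: "mset cs = b" unfolding cs_def by (rule mset_conn_list)
  have bK: "size b = K" "set_mset b \<subseteq> Pow {..<L}" using b unfolding connectivities_def by auto
  have lcs: "length cs = K" using bK(1) mcs size_mset[of cs] by simp
  have scs: "set cs \<subseteq> Pow {..<L}" using bK(2) mcs set_mset_mset[of cs] by simp
  have csv: "cs ! v \<subseteq> {..<L}" if "v < K" for v
  proof -
    have "cs ! v \<in> set cs" using that lcs by simp
    then show ?thesis using scs by auto
  qed
  define LD where "LD = load_b K N B P b"
  have LD: "LD = load_conn K N B P cs" unfolding LD_def cs_def load_b_conn_list ..
  define PS where "PS = permutations_of_set {..<L}"
  have each: "(\<Sum>n<N. \<Sum>j<B. \<Sum>u<K. if before xs (cs ! u) (P n j) then 1 else (0::real)) \<le> real N * real B * LD"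
    if xs: "xs \<in> PS" for xs
  proof -
    define rk where "rk = (\<lambda>v. Max (insert 0 ((\<lambda>l. pos xs l + 1) ` (cs ! v))))"
    show ?thesis unfolding LD
    proof (rule load_bound_ind[OF KN, where rk = rk])
      fix u T assume u: "u < K" and bf: "before xs (cs ! u) T"
      show "T \<inter> (\<Union>v\<in>{v. v < K \<and> rk v \<le> rk u}. cs ! v) = {}"
      proof (rule ccontr)
        assume "T \<inter> (\<Union>v\<in>{v. v < K \<and> rk v \<le> rk u}. cs ! v) \<noteq> {}"
        then obtain l v where l: "l \<in> T" "v < K" "rk v \<le> rk u" "l \<in> cs ! v" by blast
        have finv: "finite (cs ! v)" using csv[OF l(2)] finite_subset by blast
        have finu: "finite (cs ! u)" using csv[OF u] finite_subset by blast
        have "pos xs l + 1 \<le> rk v" unfolding rk_def using finv l(4) by (intro Max_ge) auto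
        then have le: "pos xs l + 1 \<le> rk u" using l(3) by simp
        have "rk u \<in> insert 0 ((\<lambda>l. pos xs l + 1) ` (cs ! u))" unfolding rk_def using finu by (intro Max_in) auto
        then show False
        proof
          assume "rk u = 0" then show False using le by simp
        next
          assume "rk u \<in> (\<lambda>l. pos xs l + 1) ` (cs ! u)"
          then obtain a where a: "a \<in> cs ! u" "rk u = pos xs a + 1" by auto
          have "pos xs a < pos xs l" using bf a(1) l(1) unfolding before_def by blast
          then show False using le a(2) by simp
        qed
      qed
    qed
  qed
  have "(\<Sum>xs\<in>PS. \<Sum>n<N. \<Sum>j<B. \<Sum>u<K. if before xs (cs ! u) (P n j) then 1 else (0::real))
        \<le> (\<Sum>xs\<in>PS. real N * real B * LD)" by (rule sum_mono) (rule each)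
  also have "\<dots> = fact L * (real N * real B * LD)" unfolding PS_def by simp
  finally have A: "(\<Sum>xs\<in>PS. \<Sum>n<N. \<Sum>j<B. \<Sum>u<K. if before xs (cs ! u) (P n j) then 1 else (0::real))
        \<le> fact L * (real N * real B * LD)" .
  have B: "(\<Sum>xs\<in>PS. \<Sum>n<N. \<Sum>j<B. \<Sum>u<K. if before xs (cs ! u) (P n j) then 1 else (0::real))
      = fact L * (\<Sum>n<N. \<Sum>j<B. \<Sum>U\<in>Pow {..<L}. real (count b U) * gperm L U (P n j))"
  proof -
    have inner: "(\<Sum>xs\<in>PS. if before xs U T then 1 else (0::real)) = fact L * gperm L U T" for U T
    proof -
      have "(\<Sum>xs\<in>PS. if before xs U T then 1 else (0::real)) = (\<Sum>xs\<in>{xs \<in> PS. before xs U T}. 1)"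
        by (rule sum.inter_filter[symmetric]) (simp add: PS_def)
      also have "\<dots> = fact L * gperm L U T" unfolding gperm_def PS_def by simp
      finally show ?thesis .
    qed
    have "(\<Sum>xs\<in>PS. \<Sum>n<N. \<Sum>j<B. \<Sum>u<K. if before xs (cs ! u) (P n j) then 1 else (0::real))
        = (\<Sum>n<N. \<Sum>j<B. \<Sum>u<K. \<Sum>xs\<in>PS. if before xs (cs ! u) (P n j) then 1 else (0::real))"
      by (subst sum.swap, rule sum.cong[OF refl], subst sum.swap, rule sum.cong[OF refl], subst sum.swap, rule refl)
    also have "\<dots> = (\<Sum>n<N. \<Sum>j<B. \<Sum>u<K. fact L * gperm L (cs ! u) (P n j))"
      by (simp only: inner)
    also have "\<dots> = fact L * (\<Sum>n<N. \<Sum>j<B. \<Sum>u<K. gperm L (cs ! u) (P n j))"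
      by (simp add: sum_distrib_left)
    also have "\<dots> = fact L * (\<Sum>n<N. \<Sum>j<B. \<Sum>U\<in>Pow {..<L}. real (count b U) * gperm L U (P n j))"
    proof -
      have "(\<Sum>u<K. gperm L (cs ! u) T) = (\<Sum>U\<in>Pow {..<L}. real (count b U) * gperm L U T)" for T
        using sum_nth_count[of "Pow {..<L}" cs "\<lambda>U. gperm L U T"] scs lcs mcs by simp
      then show ?thesis by simp
    qed
    finally show ?thesis .
  qed
  have fp: "fact L > (0::real)" by simp
  from A B fp show ?thesis unfolding LD_def by simp
qed

lemma b_bound2:
  assumes U0: "U0 \<subseteq> {..<L}" and KN: "K \<le> N" "1 \<le> K" "1 \<le> B"
  shows "(\<Sum>n<N. \<Sum>j<B. real K * (if P n j \<inter> U0 = {} then 1 else 0))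
         \<le> real N * real B * load_b K N B P (replicate_mset K U0)"
proof -
  define cs where "cs = conn_list (replicate_mset K U0)"
  have mcs: "mset cs = replicate_mset K U0" unfolding cs_def by (rule mset_conn_list)
  have lcs: "length cs = K" using mcs size_mset[of cs] by simp
  have scs: "set cs = {U0}" using mcs KN set_mset_mset[of cs] by simp
  have csv: "cs ! v = U0" if "v < K" for v
  proof -
    have "cs ! v \<in> set cs" using that lcs by simp
    then show ?thesis using scs by auto
  qed
  have un: "(\<Union>v\<in>{v. v < K \<and> (0::nat) \<le> 0}. cs ! v) = U0" using csv KN by auto
  have "(\<Sum>n<N. \<Sum>j<B. \<Sum>u<K. if P n j \<inter> U0 = {} then 1 else (0::real))
      \<le> real N * real B * load_conn K N B P cs"
    by (rule load_bound_ind[OF KN, where rk = "\<lambda>_. 0"]) (use un in auto)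
  then show ?thesis unfolding load_b_conn_list cs_def by simp
qed


lemma gperm_sum:
  assumes T: "T \<subseteq> {..<L}"
  shows "(\<Sum>U\<in>Pow {..<L}. gperm L U T) = Sc L (card T)"
proof -
  define PS where "PS = permutations_of_set {..<L}"
  have "(\<Sum>U\<in>Pow {..<L}. real (card {xs \<in> PS. before xs U T}))
      = (\<Sum>U\<in>Pow {..<L}. \<Sum>xs\<in>PS. if before xs U T then 1 else (0::real))"
    by (rule sum.cong[OF refl]) (simp add: sum.inter_filter[symmetric] PS_def)
  also have "\<dots> = (\<Sum>xs\<in>PS. \<Sum>U\<in>Pow {..<L}. if before xs U T then 1 else (0::real))"
    by (rule sum.swap)
  also have "\<dots> = (\<Sum>xs\<in>PS. real (card {U. U \<subseteq> {..<L} \<and> before xs U T}))"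
  proof (rule sum.cong[OF refl])
    fix xs
    have "{U. U \<subseteq> {..<L} \<and> before xs U T} = {U \<in> Pow {..<L}. before xs U T}" by auto
    then show "(\<Sum>U\<in>Pow {..<L}. if before xs U T then 1 else (0::real)) = real (card {U. U \<subseteq> {..<L} \<and> before xs U T})"
      by (simp add: sum.inter_filter[symmetric])
  qed
  also have "\<dots> = real (\<Sum>xs\<in>PS. card {U. U \<subseteq> {..<L} \<and> before xs U T})" by simp
  finally have A: "(\<Sum>U\<in>Pow {..<L}. real (card {xs \<in> PS. before xs U T})) = real (\<Sum>xs\<in>PS. card {U. U \<subseteq> {..<L} \<and> before xs U T})" .
  have F: "(\<Sum>xs\<in>PS. card {U. U \<subseteq> {..<L} \<and> before xs U T}) * (L choose card T) = fact L * Asum L (card T)"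
    using Fperm[of "{..<L}" T] T unfolding PS_def by simp
  have ct: "card T \<le> L" using card_mono[OF _ T] by simp
  have Cp: "real (L choose card T) > 0" using ct by simp
  have "(\<Sum>U\<in>Pow {..<L}. gperm L U T) = (\<Sum>U\<in>Pow {..<L}. real (card {xs \<in> PS. before xs U T})) / fact L"
    unfolding gperm_def PS_def by (simp add: sum_divide_distrib)
  also have "\<dots> = real (\<Sum>xs\<in>PS. card {U. U \<subseteq> {..<L} \<and> before xs U T}) / fact L" unfolding A ..
  also have "\<dots> = real (Asum L (card T)) / real (L choose card T)"
  proof -
    have "real (\<Sum>xs\<in>PS. card {U. U \<subseteq> {..<L} \<and> before xs U T}) * real (L choose card T) = fact L * real (Asum L (card T))"
      using arg_cong[OF F, of real] by (simp add: of_nat_mult)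
    then show ?thesis using Cp by (simp add: field_simps)
  qed
  finally show ?thesis unfolding Sc_def .
qed

lemma disj_count:
  assumes T: "T \<subseteq> {..<L}"
  shows "(\<Sum>U\<in>Pow {..<L}. if T \<inter> U = {} then 1 else (0::real)) = 2 ^ (L - card T)"
proof -
  have "(\<Sum>U\<in>Pow {..<L}. if T \<inter> U = {} then 1 else (0::real)) = real (card {U \<in> Pow {..<L}. T \<inter> U = {}})"
    by (simp add: sum.inter_filter[symmetric])
  also have "{U \<in> Pow {..<L}. T \<inter> U = {}} = Pow ({..<L} - T)" by auto
  also have "card (Pow ({..<L} - T)) = 2 ^ (L - card T)"
    using T by (simp add: card_Pow card_Diff_subset finite_subset)
  finally show ?thesis by simp
qed

lemma avg_bound:
  assumes T: "\<And>n j. n < N \<Longrightarrow> j < B \<Longrightarrow> P n j \<subseteq> {..<L}"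
    and KN: "K \<le> N" "1 \<le> K" "1 \<le> B"
  shows "(\<Sum>n<N. \<Sum>j<B. corner_load L K (card (P n j))) * real (card (connectivities L K))
         \<le> real N * real B * (\<Sum>b\<in>connectivities L K. load_b K N B P b)"
proof -
  define C where "C = connectivities L K"
  define BB where "BB = real (card C)"
  define AS where "AS = (\<lambda>U. replicate_mset K U) ` Pow {..<L}"
  have finC: "finite C" unfolding C_def by (rule finite_conn)
  have ASC: "AS \<subseteq> C" unfolding AS_def C_def connectivities_def using KN by auto
  have injAS: "inj_on (\<lambda>U. replicate_mset K U) (Pow {..<L})"
    using KN by (auto intro!: inj_onI simp: replicate_mset_eq_iff)
  define h1 where "h1 = (\<lambda>b. \<Sum>n<N. \<Sum>j<B. \<Sum>U\<in>Pow {..<L}. real (count b U) * gperm L U (P n j))"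
  define h2 where "h2 = (\<lambda>U0. \<Sum>n<N. \<Sum>j<B. real K * (if P n j \<inter> U0 = {} then 1 else (0::real)))"
  define NB where "NB = real N * real B"
  have b1: "h1 b \<le> NB * load_b K N B P b" if "b \<in> C" for b
    unfolding h1_def NB_def using b_bound1[OF that[unfolded C_def] KN] .
  have b2: "h2 U0 \<le> NB * load_b K N B P (replicate_mset K U0)" if "U0 \<in> Pow {..<L}" for U0
    unfolding h2_def NB_def using b_bound2[of U0 L K N B P] that KN by simp
  have "(\<Sum>b\<in>C. NB * load_b K N B P b)
      = (\<Sum>b\<in>C - AS. NB * load_b K N B P b) + (\<Sum>b\<in>AS. NB * load_b K N B P b)"
    using finC ASC by (metis add.commute sum.subset_diff)
  also have "(\<Sum>b\<in>AS. NB * load_b K N B P b) = (\<Sum>U0\<in>Pow {..<L}. NB * load_b K N B P (replicate_mset K U0))"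
    unfolding AS_def by (simp add: sum.reindex[OF injAS] comp_def)
  finally have split: "(\<Sum>b\<in>C. NB * load_b K N B P b)
      = (\<Sum>b\<in>C - AS. NB * load_b K N B P b) + (\<Sum>U0\<in>Pow {..<L}. NB * load_b K N B P (replicate_mset K U0))" .
  have ge: "(\<Sum>b\<in>C - AS. h1 b) + (\<Sum>U0\<in>Pow {..<L}. h2 U0) \<le> (\<Sum>b\<in>C. NB * load_b K N B P b)"
    unfolding split
    by (intro add_mono sum_mono) (use b1 b2 in auto)
  have h1AS: "(\<Sum>b\<in>C - AS. h1 b) = (\<Sum>b\<in>C. h1 b) - (\<Sum>U0\<in>Pow {..<L}. h1 (replicate_mset K U0))"
  proof -
    have "(\<Sum>b\<in>C. h1 b) = (\<Sum>b\<in>C - AS. h1 b) + (\<Sum>b\<in>AS. h1 b)"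
      using finC ASC by (metis add.commute sum.subset_diff)
    moreover have "(\<Sum>b\<in>AS. h1 b) = (\<Sum>U0\<in>Pow {..<L}. h1 (replicate_mset K U0))"
      unfolding AS_def by (simp add: sum.reindex[OF injAS] comp_def)
    ultimately show ?thesis by simp
  qed
  define Sct where "Sct = (\<lambda>n j. Sc L (card (P n j)))"
  have sumh1: "(\<Sum>b\<in>C. h1 b) = (\<Sum>n<N. \<Sum>j<B. real K * BB / 2 ^ L * Sct n j)"
  proof -
    have "(\<Sum>b\<in>C. h1 b) = (\<Sum>n<N. \<Sum>j<B. \<Sum>U\<in>Pow {..<L}. (\<Sum>b\<in>C. real (count b U)) * gperm L U (P n j))"
      unfolding h1_def
      by (subst sum.swap, rule sum.cong[OF refl], subst sum.swap, rule sum.cong[OF refl], subst sum.swap,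
          simp add: sum_distrib_right)
    also have "\<dots> = (\<Sum>n<N. \<Sum>j<B. \<Sum>U\<in>Pow {..<L}. real K * BB / 2 ^ L * gperm L U (P n j))"
    proof -
      have "(\<Sum>b\<in>C. real (count b U)) = real K * BB / 2 ^ L" if "U \<in> Pow {..<L}" for U
        using count_sum_val[of U L K] that unfolding C_def BB_def by simp
      then show ?thesis by (intro sum.cong refl) auto
    qed
    also have "\<dots> = (\<Sum>n<N. \<Sum>j<B. real K * BB / 2 ^ L * Sct n j)"
      unfolding Sct_def by (intro sum.cong refl) (subst sum_distrib_left[symmetric], simp add: gperm_sum T)
    finally show ?thesis .
  qed
  have sumh1AS: "(\<Sum>U0\<in>Pow {..<L}. h1 (replicate_mset K U0)) = (\<Sum>n<N. \<Sum>j<B. real K * Sct n j)"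
  proof -
    have c: "(\<Sum>U\<in>Pow {..<L}. real (count (replicate_mset K U0) U) * gperm L U T) = real K * gperm L U0 T"
      if "U0 \<in> Pow {..<L}" for U0 T
    proof -
      have "(\<Sum>U\<in>Pow {..<L}. real (count (replicate_mset K U0) U) * gperm L U T)
          = (\<Sum>U\<in>Pow {..<L}. if U = U0 then real K * gperm L U T else 0)"
        by (rule sum.cong) auto
      also have "\<dots> = real K * gperm L U0 T" using that by simp
      finally show ?thesis .
    qed
    have "(\<Sum>U0\<in>Pow {..<L}. h1 (replicate_mset K U0)) = (\<Sum>U0\<in>Pow {..<L}. \<Sum>n<N. \<Sum>j<B. real K * gperm L U0 (P n j))"
      unfolding h1_def by (intro sum.cong refl, rule c) simp
    also have "\<dots> = (\<Sum>n<N. \<Sum>j<B. \<Sum>U0\<in>Pow {..<L}. real K * gperm L U0 (P n j))"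
      by (subst sum.swap, rule sum.cong[OF refl], subst sum.swap, rule refl)
    also have "\<dots> = (\<Sum>n<N. \<Sum>j<B. real K * Sct n j)"
      unfolding Sct_def by (intro sum.cong refl) (subst sum_distrib_left[symmetric], simp add: gperm_sum T)
    finally show ?thesis .
  qed
  have sumh2: "(\<Sum>U0\<in>Pow {..<L}. h2 U0) = (\<Sum>n<N. \<Sum>j<B. real K * 2 ^ (L - card (P n j)))"
  proof -
    have "(\<Sum>U0\<in>Pow {..<L}. h2 U0) = (\<Sum>n<N. \<Sum>j<B. \<Sum>U0\<in>Pow {..<L}. real K * (if P n j \<inter> U0 = {} then 1 else (0::real)))"
      unfolding h2_def by (subst sum.swap, rule sum.cong[OF refl], subst sum.swap, rule refl)
    also have "\<dots> = (\<Sum>n<N. \<Sum>j<B. real K * 2 ^ (L - card (P n j)))"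
      by (intro sum.cong refl) (subst sum_distrib_left[symmetric], simp add: disj_count T)
    finally show ?thesis .
  qed
  have corner: "corner_load L K (card (P n j)) * BB = real K * BB / 2 ^ L * Sct n j - real K * Sct n j + real K * 2 ^ (L - card (P n j))"
    if "n < N" "j < B" for n j
  proof -
    have ct: "card (P n j) \<le> L" using card_mono[OF _ T[OF that]] by simp
    have "(1::nat) \<le> 2 ^ L" by simp
    then have "K \<le> K + 2 ^ L - 1" by linarith
    then have BBp: "BB > 0" unfolding BB_def C_def card_conn by simp
    show ?thesis
      unfolding corner_eq[OF ct] Sct_def BB_def[symmetric] C_def[symmetric]
      using BBp unfolding BB_def C_def card_conn[symmetric] by (simp add: field_simps)
  qed
  have "(\<Sum>n<N. \<Sum>j<B. corner_load L K (card (P n j))) * BB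
      = (\<Sum>n<N. \<Sum>j<B. real K * BB / 2 ^ L * Sct n j - real K * Sct n j + real K * 2 ^ (L - card (P n j)))"
    by (simp add: sum_distrib_right corner)
  also have "\<dots> = (\<Sum>b\<in>C. h1 b) - (\<Sum>U0\<in>Pow {..<L}. h1 (replicate_mset K U0)) + (\<Sum>U0\<in>Pow {..<L}. h2 U0)"
    unfolding sumh1 sumh1AS sumh2 by (simp add: sum.distrib sum_subtractf)
  also have "\<dots> \<le> (\<Sum>b\<in>C. NB * load_b K N B P b)" using ge h1AS by simp
  also have "\<dots> = NB * (\<Sum>b\<in>C. load_b K N B P b)" by (simp add: sum_distrib_left)
  finally show ?thesis unfolding NB_def BB_def C_def .
qed


lemma placement_sum:
  assumes P: "uncoded_placement Lam N B M P"
  shows "(\<Sum>n<N. \<Sum>j<B. real (card (P n j))) \<le> real Lam * M * real B"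
proof -
  have sub: "P n j \<subseteq> {..<Lam}" if "n < N" "j < B" for n j using P that unfolding uncoded_placement_def by auto
  have cl: "\<forall>l<Lam. real (card {(n, j). n < N \<and> j < B \<and> l \<in> P n j}) \<le> M * real B"
    using P unfolding uncoded_placement_def by auto
  have "(\<Sum>n<N. \<Sum>j<B. real (card (P n j))) = (\<Sum>n<N. \<Sum>j<B. \<Sum>l<Lam. if l \<in> P n j then 1 else (0::real))"
  proof (intro sum.cong refl)
    fix n j assume "n \<in> {..<N}" "j \<in> {..<B}"
    then have s: "P n j \<subseteq> {..<Lam}" using sub by auto
    have "{l \<in> {..<Lam}. l \<in> P n j} = P n j" using s by auto
    then show "real (card (P n j)) = (\<Sum>l<Lam. if l \<in> P n j then 1 else (0::real))"
      by (simp add: sum.inter_filter[symmetric])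
  qed
  also have "\<dots> = (\<Sum>l<Lam. \<Sum>n<N. \<Sum>j<B. if l \<in> P n j then 1 else (0::real))"
    by (subst sum.swap, rule sum.cong[OF refl], subst sum.swap, rule refl)
  also have "\<dots> = (\<Sum>l<Lam. real (card {(n, j). n < N \<and> j < B \<and> l \<in> P n j}))"
  proof (intro sum.cong refl)
    fix l
    have "(\<Sum>n<N. \<Sum>j<B. if l \<in> P n j then 1 else (0::real)) = (\<Sum>x\<in>{..<N} \<times> {..<B}. if l \<in> P (fst x) (snd x) then 1 else (0::real))"
      by (simp add: sum.cartesian_product split_def)
    also have "\<dots> = real (card {x \<in> {..<N} \<times> {..<B}. l \<in> P (fst x) (snd x)})"
      by (simp add: sum.inter_filter[symmetric])
    also have "{x \<in> {..<N} \<times> {..<B}. l \<in> P (fst x) (snd x)} = {(n, j). n < N \<and> j < B \<and> l \<in> P n j}" by auto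
    finally show "(\<Sum>n<N. \<Sum>j<B. if l \<in> P n j then 1 else (0::real)) = real (card {(n, j). n < N \<and> j < B \<and> l \<in> P n j})" .
  qed
  also have "\<dots> \<le> (\<Sum>l<Lam. M * real B)" by (rule sum_mono) (use cl in auto)
  also have "\<dots> = real Lam * M * real B" by simp
  finally show ?thesis .
qed

theorem theorem3:
  fixes Lam K N B :: nat and M :: real
  assumes "Lam \<ge> 1" and "K \<ge> 1" and "N \<ge> K" and "B \<ge> 1"
    and "0 \<le> M" and "M \<le> real N"
  shows "R_star_avg Lam K N B M \<ge> R_avg_LB Lam K N M"
proof -
  define s where "s = M * real Lam / real N"
  define t0 where "t0 = min (nat \<lfloor>s\<rfloor>) (Lam - 1)"
  define LB where "LB = corner_load Lam K t0 + (s - real t0) * (corner_load Lam K (t0 + 1) - corner_load Lam K t0)"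
  have LBeq: "R_avg_LB Lam K N M = LB" unfolding R_avg_LB_def LB_def s_def t0_def Let_def ..
  define C where "C = connectivities Lam K"
  have Np: "real N > 0" using assms by simp
  have BBge: "real ((K + 2 ^ Lam - 1) choose K) \<ge> 2 ^ Lam"
  proof -
    have inj: "inj_on (\<lambda>U. replicate_mset K U) (Pow {..<Lam})"
      using assms by (auto intro!: inj_onI simp: replicate_mset_eq_iff)
    have "(\<lambda>U. replicate_mset K U) ` Pow {..<Lam} \<subseteq> C" unfolding C_def connectivities_def using assms by auto
    then have "card ((\<lambda>U. replicate_mset K U) ` Pow {..<Lam}) \<le> card C"
      by (rule card_mono[OF finite_conn[of Lam K, folded C_def]])
    then have "2 ^ Lam \<le> card C" using card_image[OF inj] by (simp add: card_Pow)
    then show ?thesis unfolding C_def card_conn by (metis of_nat_le_iff of_nat_numeral of_nat_power)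
  qed
  have cd: "cdec Lam (corner_load Lam K)" by (rule cdec_corner[OF BBge])
  have Cp: "real (card C) > 0"
  proof -
    have "(2::real) ^ Lam > 0" by simp
    then show ?thesis using BBge unfolding C_def card_conn by linarith
  qed
  show ?thesis
    unfolding LBeq R_star_avg_def C_def[symmetric]
  proof (rule cInf_greatest)
    show "(\<lambda>P. (\<Sum>b\<in>C. load_b K N B P b) / real (card C)) ` {P. uncoded_placement Lam N B M P} \<noteq> {}"
    proof -
      have "uncoded_placement Lam N B M (\<lambda>n j. {})" unfolding uncoded_placement_def using assms by simp
      then show ?thesis by blast
    qed
  next
    fix x assume "x \<in> (\<lambda>P. (\<Sum>b\<in>C. load_b K N B P b) / real (card C)) ` {P. uncoded_placement Lam N B M P}"
    then obtain P where P: "uncoded_placement Lam N B M P" and x: "x = (\<Sum>b\<in>C. load_b K N B P b) / real (card C)"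
      by auto
    have sub: "P n j \<subseteq> {..<Lam}" if "n < N" "j < B" for n j using P that unfolding uncoded_placement_def by auto
    have avg: "(\<Sum>n<N. \<Sum>j<B. corner_load Lam K (card (P n j))) * real (card C)
         \<le> real N * real B * (\<Sum>b\<in>C. load_b K N B P b)"
      unfolding C_def by (rule avg_bound[OF sub]) (use assms in auto)
    define X where "X = {..<N} \<times> {..<B}"
    have cX: "card X = N * B" unfolding X_def by simp
    have jen: "real (card X) * LB \<le> (\<Sum>x\<in>X. corner_load Lam K (card (P (fst x) (snd x))))"
      unfolding LB_def
    proof (rule jensen_interp[OF cd])
      show "1 \<le> Lam" using assms by simp
      show "finite X" unfolding X_def by simp
      show "t0 + 1 \<le> Lam" unfolding t0_def using assms by simp
      show "\<And>x. x \<in> X \<Longrightarrow> card (P (fst x) (snd x)) \<le> Lam"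
      proof -
        fix x assume "x \<in> X"
        then have "P (fst x) (snd x) \<subseteq> {..<Lam}" using sub unfolding X_def by (cases x) auto
        then have "card (P (fst x) (snd x)) \<le> card {..<Lam}" by (intro card_mono) auto
        then show "card (P (fst x) (snd x)) \<le> Lam" by simp
      qed
      have "(\<Sum>x\<in>X. real (card (P (fst x) (snd x)))) = (\<Sum>n<N. \<Sum>j<B. real (card (P n j)))"
        unfolding X_def by (simp add: sum.cartesian_product split_def)
      also have "\<dots> \<le> real Lam * M * real B" by (rule placement_sum[OF P])
      also have "\<dots> = real (card X) * s" unfolding cX s_def using Np by (simp add: field_simps)
      finally show "(\<Sum>x\<in>X. real (card (P (fst x) (snd x)))) \<le> real (card X) * s" .
    qed
    have "(\<Sum>x\<in>X. corner_load Lam K (card (P (fst x) (snd x)))) = (\<Sum>n<N. \<Sum>j<B. corner_load Lam K (card (P n j)))"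
      unfolding X_def by (simp add: sum.cartesian_product split_def)
    then have "real N * real B * LB * real (card C) \<le> real N * real B * (\<Sum>b\<in>C. load_b K N B P b)"
      using jen avg cX Cp by (smt (verit) mult_right_mono of_nat_0_le_iff of_nat_mult)
    then have "LB * real (card C) \<le> (\<Sum>b\<in>C. load_b K N B P b)"
      using assms Np by (simp add: mult.assoc)
    then show "LB \<le> x" unfolding x using Cp by (simp add: le_divide_eq)
  qed
qed


end
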